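(* (Perfect completeness.) Consider the card-based Makaro protocol described in the context. If the prover $P$ knows a solution of the given Makaro puzzle and places the cell cards according to it, and the protocol is executed as specified, then the verifier $V$ always accepts.
   Context: Makaro puzzle: a rectangular grid of white and black cells. The white cells are partitioned into polyominoes called rooms; the size of a room is its number of cells. Some white cells already contain a number. Each black cell contains an arrow pointing to one of its (horizontally or vertically) adjacent white cells. A solution assigns a number to every empty white cell such that: (room condition) each room of size $p$ contains exactly the numbers $1,2,\dots,p$; (neighbor condition) two orthogonally adjacent white cells in different rooms contain different numbers; (arrow condition) for each black cell, the white cell its arrow points to contains the unique largest number among the (up to four) numbers in the white cells orthogonally adjacent to that black cell. Let $k$ be the size of the largest room. Cards: all cards have distinct front faces and identical backs. For each room $R$ of size $p$ there are cell cards $R_1,\dots,R_p$ (cards of different rooms are all distinct); there are helping cards $h_1,\dots,h_k$ and encoding cards $a_i,b_i,c_i,d_i$ for $i=1,\dots,2k-1$. A pile-scramble shuffle applied to a matrix of face-down cards permutes its columns by a uniformly random permutation unknown to all parties; a pile-shifting shuffle permutes the columns by a uniformly random cyclic shift unknown to all parties. Protocol. Setup: on each white cell of room $R$ containing (or, for empty cells, secretly assigned by $P$) the number $v$, $P$ places the face-down card $R_v$ (publicly for prefilled cells, secretly for the others). Room check, for each room $R$ of size $p$: put its cell cards in a fixed order in Row 1 of a $2\times p$ matrix and $h_1,\dots,h_p$ in Row 2; pile-scramble; reveal Row 1 and reject unless it is a permutation of $R_1,\dots,R_p$; turn these cards face down, pile-scramble again, reveal Row 2, rearrange the columns so Row 2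 reads $h_1,\dots,h_p$, and return the Row 1 cards to their cells. Conversion (cell with card $R_x$ in room $R$ of size $p$, target length $m\ge p$, card set $X\in\{a,b,c,d\}$): put the cell cards of $R$ in a fixed order in Row 1 of a matrix, with $R_x$ in column $i$; $h_1,\dots,h_p$ in Row 2; $X_1$ in Row 3, column $i$; $P$ secretly forms a uniformly random permutation $S$ of $X_2,\dots,X_m$ and fills the remaining $p-1$ cells of Row 3 from left to right with the first $p-1$ cards of $S$. Pile-scramble the $3\times p$ matrix; reveal Row 1 and rearrange columns so Row 1 reads $R_1,\dots,R_p$; remove Row 3 as a sequence $T$ and append the remaining $m-p$ cards of $S$ to obtain a face-down sequence of length $m$ (the encoding sequence). Then turn Row 1 face down, pile-scramble, reveal Row 2, rearrange so it reads $h_1,\dots,h_p$, and return the cell cards to their cells. Neighbor check, for each pair of adjacent white cells in different rooms (room sizes $p,q$, $m=\max(p,q)$): convert the first cell with set $a$ and the second with set $b$, both with length $m$; place the two sequences as Rows 1 and 2 of a $2\times m$ matrix; pile-scramble; reveal Row 1; let $a_1$ be in column $i$; reveal the Row 2 card in column $i$ and reject if it is $b_1$. Arrow check, for each black cell: let the pointed-to cell and the other (up to three) adjacent white cells be considered, and let $m$ be the maximum room size among them; convert the pointed-to cell with set $a$ and the others with sets $b,c,d$, all with length $2m-1$; place them as rows of a matrix (Row 1 from set $a$); apply a pile-shifting shuffle; reveal Row 1, let $a_1$ be in column $i$; reveal the cards of the other rows in columns $i,i+1,\dots,i+m-1$ (indices modulo $2m-1$) and reject if any of them is $b_1$, $c_1$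 or $d_1$. $V$ accepts if no check rejects. *)

theory Defs
  imports "HOL-Combinatorics.Permutations" "HOL-Library.Multiset"
begin

type_synonym pos = "nat \<times> nat"

definition adj :: "pos \<Rightarrow> pos \<Rightarrow> bool" where
  "adj p q \<longleftrightarrow>
     (fst p = fst q \<and> (snd p = snd q + 1 \<or> snd q = snd p + 1)) \<or>
     (snd p = snd q \<and> (fst p = fst q + 1 \<or> fst q = fst p + 1))"

definition polyomino :: "pos set \<Rightarrow> bool" where
  "polyomino R \<longleftrightarrow> R \<noteq> {} \<and>
     (\<forall>c\<in>R. \<forall>c'\<in>R. (\<lambda>x y. x \<in> R \<and> y \<in> R \<and> adj x y)\<^sup>*\<^sup>* c c')"

text \<open>A Makaro puzzle on an nr x nc grid: white cells W, black cells Bk,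
  rooms (a partition of W into polyominoes), prefilled numbers 'given',
  and for each black cell the white cell its arrow points to.\<close>
definition makaro_puzzle ::
  "nat \<Rightarrow> nat \<Rightarrow> pos set \<Rightarrow> pos set \<Rightarrow> pos set set \<Rightarrow> (pos \<Rightarrow> nat option) \<Rightarrow> (pos \<Rightarrow> pos) \<Rightarrow> bool"
where
  "makaro_puzzle nr nc W Bk rooms given arrow \<longleftrightarrow>
     W \<inter> Bk = {} \<and> W \<union> Bk = {..<nr} \<times> {..<nc} \<and>
     \<Union> rooms = W \<and>
     (\<forall>R\<in>rooms. polyomino R) \<and>
     (\<forall>R\<in>rooms. \<forall>R'\<in>rooms. R \<noteq> R' \<longrightarrow> R \<inter> R' = {}) \<and>
     (\<forall>c. given c \<noteq> None \<longrightarrow> c \<in> W) \<and>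
     (\<forall>b\<in>Bk. arrow b \<in> W \<and> adj b (arrow b))"

definition room_of :: "pos set set \<Rightarrow> pos \<Rightarrow> pos set" where
  "room_of rooms c = (THE R. R \<in> rooms \<and> c \<in> R)"

definition same_room :: "pos set set \<Rightarrow> pos \<Rightarrow> pos \<Rightarrow> bool" where
  "same_room rooms c c' \<longleftrightarrow> (\<exists>R\<in>rooms. c \<in> R \<and> c' \<in> R)"

definition makaro_solution ::
  "pos set \<Rightarrow> pos set \<Rightarrow> pos set set \<Rightarrow> (pos \<Rightarrow> nat option) \<Rightarrow> (pos \<Rightarrow> pos) \<Rightarrow> (pos \<Rightarrow> nat) \<Rightarrow> bool"
where
  "makaro_solution W Bk rooms given arrow sol \<longleftrightarrow>
     \<comment> \<open>room condition\<close>
     (\<forall>R\<in>rooms. sol ` R = {1..card R}) \<and>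
     \<comment> \<open>agrees with the prefilled numbers\<close>
     (\<forall>c v. given c = Some v \<longrightarrow> sol c = v) \<and>
     \<comment> \<open>neighbor condition\<close>
     (\<forall>c\<in>W. \<forall>c'\<in>W. adj c c' \<and> \<not> same_room rooms c c' \<longrightarrow> sol c \<noteq> sol c') \<and>
     \<comment> \<open>arrow condition: the pointed cell holds the unique largest number\<close>
     (\<forall>b\<in>Bk. \<forall>c\<in>W. adj b c \<and> c \<noteq> arrow b \<longrightarrow> sol c < sol (arrow b))"

datatype letter = LA | LB | LC | LD

datatype card =
    CellC "pos set" nat
  | Hlp nat
  | Enc letter nat

type_synonym layout = "pos \<Rightarrow> card"

definition cell_cards :: "pos set \<Rightarrow> card list" where
  "cell_cards R = map (CellC R) [1..<card R + 1]"

definition hlp_cards :: "nat \<Rightarrow> card list" where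
  "hlp_cards p = map Hlp [1..<p + 1]"

definition enc_cards :: "letter \<Rightarrow> nat \<Rightarrow> nat \<Rightarrow> card list" where
  "enc_cards X i j = map (Enc X) [i..<j + 1]"

definition idx :: "'a list \<Rightarrow> 'a \<Rightarrow> nat" where
  "idx r c = (LEAST j. j < length r \<and> r ! j = c)"

text \<open>After revealing row r, rearrange the columns so that r reads t; applied to
  any row of the matrix.\<close>
definition rearr :: "'a list \<Rightarrow> 'a list \<Rightarrow> 'b list \<Rightarrow> 'b list" where
  "rearr r t row = map (\<lambda>c. row ! idx r c) t"

definition perms :: "nat \<Rightarrow> (nat \<Rightarrow> nat) set" where
  "perms n = {\<pi>. \<pi> permutes {..<n}}"

definition put_back :: "layout \<Rightarrow> pos list \<Rightarrow> card list \<Rightarrow> layout" where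
  "put_back L cs vs = (\<lambda>c. if c \<in> set cs then vs ! idx cs c else L c)"

text \<open>Sequential composition of nondeterministic (set-valued) checks;
  None means rejection.\<close>
fun run_seq :: "('a \<Rightarrow> layout \<Rightarrow> layout option set) \<Rightarrow> 'a list \<Rightarrow> layout \<Rightarrow> layout option set" where
  "run_seq f [] L = {Some L}"
| "run_seq f (x # xs) L =
     (\<Union>o' \<in> f x L. case o' of None \<Rightarrow> {None} | Some L' \<Rightarrow> run_seq f xs L')"

text \<open>Room check for room R (ord R is the fixed order of its cells).\<close>
definition room_check :: "(pos set \<Rightarrow> pos list) \<Rightarrow> pos set \<Rightarrow> layout \<Rightarrow> layout option set" where
  "room_check ord R L =
    (let p = card R; cs = ord R; row1 = map L cs; row2 = hlp_cards p in
     \<Union>\<pi>1 \<in> perms p.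
       let r1 = permute_list \<pi>1 row1; r2 = permute_list \<pi>1 row2 in
       if mset r1 \<noteq> mset (cell_cards R) then {None}
       else \<Union>\<pi>2 \<in> perms p.
         let s1 = permute_list \<pi>2 r1; s2 = permute_list \<pi>2 r2;
             f1 = rearr s2 (hlp_cards p) s1
         in {Some (put_back L cs f1)})"

text \<open>Conversion of cell c of room R to an encoding sequence of length m using
  card set X.  Returns the encoding sequence and the new layout.\<close>
definition convert ::
  "(pos set \<Rightarrow> pos list) \<Rightarrow> pos set \<Rightarrow> pos \<Rightarrow> nat \<Rightarrow> letter \<Rightarrow> layout \<Rightarrow> (card list \<times> layout) set"
where
  "convert ord R c m X L =
    (let p = card R; cs = ord R; i = idx cs c; row1 = map L cs; row2 = hlp_cards p in
     \<Union>S \<in> {S. mset S = mset (enc_cards X 2 m)}.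
       let row3 = take i S @ [Enc X 1] @ drop i (take (p - 1) S) in
       \<Union>\<sigma>1 \<in> perms p.
         let r1 = permute_list \<sigma>1 row1; r2 = permute_list \<sigma>1 row2; r3 = permute_list \<sigma>1 row3;
             u1 = rearr r1 (cell_cards R) r1; u2 = rearr r1 (cell_cards R) r2;
             T = rearr r1 (cell_cards R) r3;
             e = T @ drop (p - 1) S
         in \<Union>\<sigma>2 \<in> perms p.
           let v1 = permute_list \<sigma>2 u1; v2 = permute_list \<sigma>2 u2;
               w1 = rearr v2 (hlp_cards p) v1
           in {(e, put_back L cs w1)})"

definition neighbor_check ::
  "pos set set \<Rightarrow> (pos set \<Rightarrow> pos list) \<Rightarrow> pos \<times> pos \<Rightarrow> layout \<Rightarrow> layout option set"
where
  "neighbor_check rooms ord cc L =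
    (let c1 = fst cc; c2 = snd cc; R1 = room_of rooms c1; R2 = room_of rooms c2;
         m = max (card R1) (card R2) in
     \<Union>(e1, L1) \<in> convert ord R1 c1 m LA L.
     \<Union>(e2, L2) \<in> convert ord R2 c2 m LB L1.
     \<Union>\<tau> \<in> perms m.
       let f1 = permute_list \<tau> e1; f2 = permute_list \<tau> e2; i = idx f1 (Enc LA 1) in
       if f2 ! i = Enc LB 1 then {None} else {Some L2})"

fun convert_list ::
  "pos set set \<Rightarrow> (pos set \<Rightarrow> pos list) \<Rightarrow> nat \<Rightarrow> (pos \<times> letter) list \<Rightarrow> layout \<Rightarrow> (card list list \<times> layout) set"
where
  "convert_list rooms ord m [] L = {([], L)}"
| "convert_list rooms ord m ((c, X) # cs) L =
     (\<Union>(e, L1) \<in> convert ord (room_of rooms c) c m X L.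
      \<Union>(es, L2) \<in> convert_list rooms ord m cs L1. {(e # es, L2)})"

text \<open>Arrow check for black cell b; oth b lists the other adjacent white cells.\<close>
definition arrow_check ::
  "pos set set \<Rightarrow> (pos set \<Rightarrow> pos list) \<Rightarrow> (pos \<Rightarrow> pos) \<Rightarrow> (pos \<Rightarrow> pos list) \<Rightarrow> pos \<Rightarrow> layout \<Rightarrow> layout option set"
where
  "arrow_check rooms ord arrow oth b L =
    (let t = arrow b; os = oth b;
         m = Max ((\<lambda>c. card (room_of rooms c)) ` set (t # os)); n = 2 * m - 1 in
     \<Union>(e1, L1) \<in> convert ord (room_of rooms t) t n LA L.
     \<Union>(es, L2) \<in> convert_list rooms ord n (zip os [LB, LC, LD]) L1.
     \<Union>r \<in> {..<n}.
       let f1 = rotate r e1; fs = map (rotate r) es; i = idx f1 (Enc LA 1) in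
       if (\<exists>f \<in> set fs. \<exists>j<m. f ! ((i + j) mod n) \<in> {Enc LB 1, Enc LC 1, Enc LD 1})
       then {None} else {Some L2})"

definition setup_layout :: "pos set set \<Rightarrow> (pos \<Rightarrow> nat) \<Rightarrow> layout" where
  "setup_layout rooms sol = (\<lambda>c. CellC (room_of rooms c) (sol c))"

text \<open>All possible outcomes of the whole protocol (over all shuffle results and
  all random choices of P); None = some check rejected.\<close>
definition protocol ::
  "pos set set \<Rightarrow> (pos \<Rightarrow> pos) \<Rightarrow> (pos set \<Rightarrow> pos list) \<Rightarrow> (pos \<Rightarrow> pos list)
   \<Rightarrow> pos set list \<Rightarrow> (pos \<times> pos) list \<Rightarrow> pos list \<Rightarrow> layout \<Rightarrow> layout option set"
where
  "protocol rooms arrow ord oth rl np bl L0 =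
    (\<Union>o1 \<in> run_seq (room_check ord) rl L0.
      case o1 of None \<Rightarrow> {None} | Some L1 \<Rightarrow>
      (\<Union>o2 \<in> run_seq (neighbor_check rooms ord) np L1.
        case o2 of None \<Rightarrow> {None} | Some L2 \<Rightarrow>
        run_seq (arrow_check rooms ord arrow oth) bl L2))"

end

theory Submission
  imports Defs
begin

lemma idx_in: assumes "x \<in> set r" shows "idx r x < length r \<and> r ! idx r x = x"
proof -
  obtain j where "j < length r" "r ! j = x" using assms by (meson in_set_conv_nth)
  then show ?thesis unfolding idx_def by (rule_tac LeastI[of "\<lambda>j. j < length r \<and> r ! j = x" j]) simp
qed

lemma idx_nth: assumes "distinct r" "j < length r" shows "idx r (r ! j) = j"
  using idx_in[of "r ! j" r] assms nth_eq_iff_index_eq by (metis nth_mem)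

lemma pl_nth: "i < length xs \<Longrightarrow> permute_list f xs ! i = xs ! f i"
  by (simp add: permute_list_def)

lemma rearr_nth: "k < length t \<Longrightarrow> rearr r t row ! k = row ! idx r (t ! k)"
  by (simp add: rearr_def)

lemma length_rearr[simp]: "length (rearr r t row) = length t"
  by (simp add: rearr_def)

lemma cell_len[simp]: "length (cell_cards R) = card R" by (simp add: cell_cards_def)
lemma cell_nth: "k < card R \<Longrightarrow> cell_cards R ! k = CellC R (k+1)" by (simp add: cell_cards_def del: upt_Suc)
lemma cell_set: "set (cell_cards R) = CellC R ` {1..card R}"
  by (simp add: cell_cards_def atLeastLessThanSuc_atLeastAtMost del: upt_Suc)
lemma hlp_len[simp]: "length (hlp_cards p) = p" by (simp add: hlp_cards_def)
lemma hlp_nth: "k < p \<Longrightarrow> hlp_cards p ! k = Hlp (k+1)" by (simp add: hlp_cards_def del: upt_Suc)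
lemma enc_set: "set (enc_cards X i j) = Enc X ` {i..j}"
  by (simp add: enc_cards_def atLeastLessThanSuc_atLeastAtMost del: upt_Suc)

lemma perm_lt: "\<sigma> \<in> perms p \<Longrightarrow> j < p \<Longrightarrow> \<sigma> j < p"
  unfolding perms_def using permutes_in_image by fastforce

lemma put_back_id: assumes "\<forall>t<length cs. vs ! t = L (cs ! t)" shows "put_back L cs vs = L"
proof
  fix c show "put_back L cs vs c = L c"
    using assms idx_in[of c cs] by (auto simp: put_back_def)
qed

lemma run_seq_ok: "(\<forall>x\<in>set xs. f x L \<subseteq> {Some L}) \<Longrightarrow> run_seq f xs L \<subseteq> {Some L}"
proof (induction xs)
  case Nil then show ?case by simp
next
  case (Cons a xs)
  show ?case
  proof
    fix x assume "x \<in> run_seq f (a # xs) L"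
    then obtain o' where o: "o' \<in> f a L" and x: "x \<in> (case o' of None \<Rightarrow> {None} | Some L' \<Rightarrow> run_seq f xs L')" by auto
    from o Cons.prems have "o' = Some L" by auto
    with x Cons show "x \<in> {Some L}" by auto
  qed
qed

definition conv_e :: "(pos set \<Rightarrow> pos list) \<Rightarrow> pos set \<Rightarrow> pos \<Rightarrow> nat \<Rightarrow> letter \<Rightarrow> layout \<Rightarrow> card list \<Rightarrow> (nat \<Rightarrow> nat) \<Rightarrow> card list" where
  "conv_e ord R c m X L S \<sigma>1 = (let p = card R; cs = ord R; i = idx cs c; row1 = map L cs;
     row3 = take i S @ [Enc X 1] @ drop i (take (p - 1) S);
     r1 = permute_list \<sigma>1 row1; r3 = permute_list \<sigma>1 row3;
     T = rearr r1 (cell_cards R) r3 in T @ drop (p - 1) S)"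

definition conv_L :: "(pos set \<Rightarrow> pos list) \<Rightarrow> pos set \<Rightarrow> layout \<Rightarrow> (nat \<Rightarrow> nat) \<Rightarrow> (nat \<Rightarrow> nat) \<Rightarrow> layout" where
  "conv_L ord R L \<sigma>1 \<sigma>2 = (let p = card R; cs = ord R; row1 = map L cs; row2 = hlp_cards p;
     r1 = permute_list \<sigma>1 row1; r2 = permute_list \<sigma>1 row2;
     u1 = rearr r1 (cell_cards R) r1; u2 = rearr r1 (cell_cards R) r2;
     v1 = permute_list \<sigma>2 u1; v2 = permute_list \<sigma>2 u2;
     w1 = rearr v2 (hlp_cards p) v1 in put_back L cs w1)"

lemma convert_alt: "convert ord R c m X L = (\<Union>S\<in>{S. mset S = mset (enc_cards X 2 m)}.
   \<Union>\<sigma>1\<in>perms (card R). \<Union>\<sigma>2\<in>perms (card R). {(conv_e ord R c m X L S \<sigma>1, conv_L ord R L \<sigma>1 \<sigma>2)})"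
  by (simp only: convert_def conv_e_def conv_L_def Let_def)

lemma UN_pair_E: "x \<in> (\<Union>(a,b)\<in>A. F a b) \<Longrightarrow> (\<And>a b. (a,b) \<in> A \<Longrightarrow> x \<in> F a b \<Longrightarrow> P) \<Longrightarrow> P"
  by auto

locale mk =
  fixes rooms :: "pos set set" and ord :: "pos set \<Rightarrow> pos list" and sol :: "pos \<Rightarrow> nat"
  assumes disj: "\<forall>R\<in>rooms. \<forall>R'\<in>rooms. R \<noteq> R' \<longrightarrow> R \<inter> R' = {}"
    and ordok: "\<forall>R\<in>rooms. distinct (ord R) \<and> set (ord R) = R"
    and roomc: "\<forall>R\<in>rooms. sol ` R = {1..card R}"
begin

abbreviation "L0 \<equiv> setup_layout rooms sol"

lemma room_of_eq: "R \<in> rooms \<Longrightarrow> c \<in> R \<Longrightarrow> room_of rooms c = R"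
  unfolding room_of_def using disj by (rule_tac the_equality) auto

lemma L0_R: "R \<in> rooms \<Longrightarrow> c \<in> R \<Longrightarrow> L0 c = CellC R (sol c)"
  by (simp add: setup_layout_def room_of_eq)

lemma room_basic:
  assumes "R \<in> rooms"
  shows "length (ord R) = card R" "finite R" "inj_on sol R"
    "distinct (map L0 (ord R))" "set (map L0 (ord R)) = set (cell_cards R)"
    "\<And>t. t < card R \<Longrightarrow> map L0 (ord R) ! t = L0 (ord R ! t)"
proof -
  have d: "distinct (ord R)" "set (ord R) = R" using ordok assms by auto
  then show f: "finite R" by (metis List.finite_set)
  show l: "length (ord R) = card R" using d distinct_card by fastforce
  have "card (sol ` R) = card R" using roomc assms by simp
  then show inj: "inj_on sol R" using f inj_on_iff_eq_card by blast
  have "inj_on L0 R"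
    using inj L0_R[OF assms] unfolding inj_on_def by auto
  then show "distinct (map L0 (ord R))" using d by (simp add: distinct_map)
  have "L0 ` R = CellC R ` (sol ` R)" using L0_R[OF assms] by (auto simp: image_iff)
  then show "set (map L0 (ord R)) = set (cell_cards R)"
    using roomc assms d by (simp add: cell_set)
  show "\<And>t. t < card R \<Longrightarrow> map L0 (ord R) ! t = L0 (ord R ! t)" using l by simp
qed

lemma room_check_ok: assumes R: "R \<in> rooms" shows "room_check ord R L0 \<subseteq> {Some L0}"
proof
  fix x assume x: "x \<in> room_check ord R L0"
  define p where "p = card R"
  define cs where "cs = ord R"
  define row1 where "row1 = map L0 cs"
  define row2 where "row2 = hlp_cards p"
  note rb = room_basic[OF R, folded p_def cs_def, folded row1_def]
  obtain \<pi>1 where p1: "\<pi>1 \<in> perms p" and x1: "x \<in> (if mset (permute_list \<pi>1 row1) \<noteq> mset (cell_cards R) then {None}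
      else \<Union>\<pi>2 \<in> perms p. {Some (put_back L0 cs (rearr (permute_list \<pi>2 (permute_list \<pi>1 row2)) (hlp_cards p) (permute_list \<pi>2 (permute_list \<pi>1 row1))))})"
    using x unfolding room_check_def Let_def p_def cs_def row1_def row2_def by blast
  have lr1: "length row1 = p" "length row2 = p" using rb by (auto simp: row1_def row2_def)
  have pp1: "\<pi>1 permutes {..<length row1}" "\<pi>1 permutes {..<length row2}" using p1 lr1 by (auto simp: perms_def)
  have "distinct (cell_cards R)" by (simp add: cell_cards_def distinct_map inj_on_def del: upt_Suc)
  then have "mset row1 = mset (cell_cards R)" using rb set_eq_iff_mset_eq_distinct by (metis row1_def)
  then have ms: "mset (permute_list \<pi>1 row1) = mset (cell_cards R)" using pp1 by simp
  from x1 ms obtain \<pi>2 where p2: "\<pi>2 \<in> perms p" and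
    xe: "x = Some (put_back L0 cs (rearr (permute_list \<pi>2 (permute_list \<pi>1 row2)) (hlp_cards p) (permute_list \<pi>2 (permute_list \<pi>1 row1))))"
    by auto
  define s1 where "s1 = permute_list \<pi>2 (permute_list \<pi>1 row1)"
  define s2 where "s2 = permute_list \<pi>2 (permute_list \<pi>1 row2)"
  have pp2: "\<pi>2 permutes {..<length (permute_list \<pi>1 row2)}" using p2 lr1 by (auto simp: perms_def)
  have "rearr s2 (hlp_cards p) s1 ! k = row1 ! k" if k: "k < p" for k
  proof -
    have "Hlp (k+1) \<in> set s2" unfolding s2_def using pp1 pp2 k hlp_nth[OF k] lr1
      by (simp add: row2_def) (metis hlp_len nth_mem)
    from idx_in[OF this] obtain q where q: "q = idx s2 (Hlp (k+1))" "q < p" "s2 ! q = Hlp (k+1)"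
      by (simp add: s2_def lr1)
    have a: "\<pi>2 q < p" using perm_lt[OF p2 q(2)] .
    have b: "\<pi>1 (\<pi>2 q) < p" using perm_lt[OF p1 a] .
    have "s2 ! q = Hlp (\<pi>1 (\<pi>2 q) + 1)" unfolding s2_def using q a b lr1
      by (simp add: pl_nth row2_def hlp_nth)
    then have "\<pi>1 (\<pi>2 q) = k" using q by simp
    moreover have "s1 ! q = row1 ! \<pi>1 (\<pi>2 q)" unfolding s1_def using q a lr1 by (simp add: pl_nth)
    ultimately show ?thesis using k q by (simp add: rearr_nth hlp_nth)
  qed
  then have "put_back L0 cs (rearr s2 (hlp_cards p) s1) = L0"
    by (intro put_back_id) (simp add: rb row1_def lr1[unfolded row1_def, simplified])
  then show "x \<in> {Some L0}" using xe s1_def s2_def by simp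
qed

lemma convert_ok:
  assumes R: "R \<in> rooms" and c: "c \<in> R" and pm: "card R \<le> m"
    and mem: "(e, L') \<in> convert ord R c m X L0"
  shows "L' = L0 \<and> length e = m \<and> e ! (sol c - 1) = Enc X 1 \<and>
     (\<forall>q<m. q \<noteq> sol c - 1 \<longrightarrow> (\<exists>k\<ge>2. e ! q = Enc X k))"
proof -
  define p where "p = card R"
  define cs where "cs = ord R"
  define i where "i = idx cs c"
  define row1 where "row1 = map L0 cs"
  define row2 where "row2 = hlp_cards p"
  note rb = room_basic[OF R, folded p_def cs_def, folded row1_def]
  obtain S \<sigma>1 \<sigma>2 where S: "mset S = mset (enc_cards X 2 m)" and p1: "\<sigma>1 \<in> perms p" and p2: "\<sigma>2 \<in> perms p" and
   e0: "e = conv_e ord R c m X L0 S \<sigma>1" and L0': "L' = conv_L ord R L0 \<sigma>1 \<sigma>2"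
    using mem unfolding convert_alt p_def by blast
  have e: "e = rearr (permute_list \<sigma>1 row1) (cell_cards R) (permute_list \<sigma>1 (take i S @ [Enc X 1] @ drop i (take (p - 1) S))) @ drop (p-1) S"
    unfolding e0 conv_e_def Let_def p_def cs_def row1_def i_def ..
  have L': "L' = put_back L0 cs (rearr (permute_list \<sigma>2 (rearr (permute_list \<sigma>1 row1) (cell_cards R) (permute_list \<sigma>1 row2))) (hlp_cards p) (permute_list \<sigma>2 (rearr (permute_list \<sigma>1 row1) (cell_cards R) (permute_list \<sigma>1 row1))))"
    unfolding L0' conv_L_def Let_def p_def cs_def row1_def row2_def ..
  have scR: "sol c \<in> {1..p}" using roomc R c p_def by blast
  have "length S = length (enc_cards X 2 m)" using S by (metis size_mset)
  then have lS: "length S = m - 1" by (simp add: enc_cards_def del: upt_Suc)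
  have "set S = set (enc_cards X 2 m)" using S by (metis set_mset_mset)
  then have sS: "set S = Enc X ` {2..m}" by (simp add: enc_set)
  have cscs: "c \<in> set cs" using ordok R c cs_def by blast
  from idx_in[OF cscs] have ip: "i < p" "cs ! i = c" using rb by (auto simp: i_def cs_def p_def)
  define row3 where "row3 = take i S @ [Enc X 1] @ drop i (take (p - 1) S)"
  define r1 where "r1 = permute_list \<sigma>1 row1"
  define r2 where "r2 = permute_list \<sigma>1 row2"
  define r3 where "r3 = permute_list \<sigma>1 row3"
  define u1 where "u1 = rearr r1 (cell_cards R) r1"
  define u2 where "u2 = rearr r1 (cell_cards R) r2"
  define T where "T = rearr r1 (cell_cards R) r3"
  define v1 where "v1 = permute_list \<sigma>2 u1"
  define v2 where "v2 = permute_list \<sigma>2 u2"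
  define w1 where "w1 = rearr v2 (hlp_cards p) v1"
  have eT: "e = T @ drop (p-1) S" using e by (simp add: T_def r1_def r3_def row3_def)
  have Lw: "L' = put_back L0 cs w1" using L' by (simp add: w1_def v1_def v2_def u1_def u2_def r1_def r2_def)
  have lrow: "length row1 = p" "length row2 = p" using rb by (auto simp: row1_def row2_def p_def)
  have lrow3: "length row3 = p" using ip lS pm p_def unfolding row3_def by auto
  have lr: "length r1 = p" "length r2 = p" "length r3 = p" "length u1 = p" "length u2 = p"
    "length T = p" "length v1 = p" "length v2 = p" "length w1 = p"
    using lrow lrow3 by (auto simp: r1_def r2_def r3_def u1_def u2_def T_def v1_def v2_def w1_def p_def)
  have pp1: "\<sigma>1 permutes {..<length row1}" using p1 lrow by (auto simp: perms_def)
  have dr1: "distinct r1" "set r1 = set (cell_cards R)" using pp1 rb by (auto simp: r1_def)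
  define j where "j k = idx r1 (cell_cards R ! k)" for k
  have jk: "j k < p \<and> r1 ! j k = cell_cards R ! k" if "k < p" for k
  proof -
    have "cell_cards R ! k \<in> set r1" using dr1 that p_def by (metis cell_len nth_mem)
    from idx_in[OF this] show ?thesis using lr j_def by simp
  qed
  have jk2: "\<sigma>1 (j k) < p \<and> row1 ! \<sigma>1 (j k) = CellC R (k+1)" if "k < p" for k
    using jk[OF that] perm_lt[OF p1] that lrow by (metis r1_def pl_nth cell_nth p_def)
  have row1n: "row1 ! t = CellC R (sol (cs ! t))" if "t < p" for t
    using that rb L0_R[OF R] ordok R cs_def by (metis nth_mem row1_def)
  have u2n: "u2 ! k = Hlp (\<sigma>1 (j k) + 1)" if "k < p" for k
    using that jk2[OF that] jk[OF that] lr unfolding u2_def r2_def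
    by (simp add: rearr_nth j_def p_def pl_nth lrow row2_def hlp_nth)
  have u1n: "u1 ! k = cell_cards R ! k" if "k < p" for k
    using that jk[OF that] unfolding u1_def by (simp add: rearr_nth j_def p_def)
  have Tn: "T ! k = row3 ! \<sigma>1 (j k)" if "k < p" for k
    using that jk[OF that] lrow3 unfolding T_def r3_def by (simp add: rearr_nth j_def p_def pl_nth)
  have w1n: "w1 ! t = row1 ! t" if t: "t < p" for t
  proof -
    have "row1 ! t \<in> set (cell_cards R)" using rb t lrow by (metis nth_mem)
    then obtain k where k: "k < p" "row1 ! t = cell_cards R ! k" by (metis in_set_conv_nth cell_len p_def)
    define j0 where "j0 = inv \<sigma>1 t"
    have pp: "\<sigma>1 permutes {..<p}" using p1 perms_def by auto
    have j0: "j0 < p" "\<sigma>1 j0 = t" using pp t permutes_inverses(1)[OF pp] permutes_in_image[OF permutes_inv[OF pp]]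
      by (auto simp: j0_def)
    have "r1 ! j0 = r1 ! j k" using j0 jk[OF k(1)] k by (simp add: r1_def pl_nth lrow)
    then have "j k = j0" using dr1 j0 jk[OF k(1)] lr nth_eq_iff_index_eq by metis
    then have "u2 ! k = Hlp (t+1)" using u2n k j0 by simp
    then have "Hlp (t+1) \<in> set v2" using k lr p2 unfolding v2_def perms_def
      by (simp, metis nth_mem)
    from idx_in[OF this] obtain q where q: "q = idx v2 (Hlp (t+1))" "q < p" "v2 ! q = Hlp (t+1)"
      using lr by auto
    have a: "\<sigma>2 q < p" using perm_lt[OF p2 q(2)] .
    have "v2 ! q = Hlp (\<sigma>1 (j (\<sigma>2 q)) + 1)" using q a lr u2n by (simp add: v2_def pl_nth)
    then have b: "\<sigma>1 (j (\<sigma>2 q)) = t" using q by simp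
    have "w1 ! t = v1 ! q" using q t by (simp add: w1_def rearr_nth hlp_nth)
    also have "\<dots> = cell_cards R ! \<sigma>2 q" using q a lr u1n by (simp add: v1_def pl_nth)
    also have "\<dots> = row1 ! t" using jk2[OF a] b cell_nth a p_def by simp
    finally show ?thesis .
  qed
  have "L' = L0" unfolding Lw
    by (rule put_back_id) (use w1n lr rb lrow in \<open>simp add: row1_def p_def\<close>)
  have r3i: "row3 ! i = Enc X 1" using ip lS pm p_def unfolding row3_def by (simp add: nth_append)
  have r3o: "row3 ! x \<in> set S" if "x < p" "x \<noteq> i" for x
  proof (cases "x < i")
    case True then show ?thesis using ip lS pm p_def unfolding row3_def by (simp add: nth_append)
  next
    case False
    then have "row3 ! x = drop i (take (p - 1) S) ! (x - i - 1)" using ip lS pm p_def that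
      unfolding row3_def by (simp add: nth_append)
    moreover have "x - i - 1 < length (drop i (take (p - 1) S))" using ip lS pm p_def that False by simp
    ultimately show ?thesis by (metis nth_mem in_set_dropD in_set_takeD)
  qed
  have row1i: "row1 ! i = CellC R (sol c)" using row1n ip by simp
  have Tc: "T ! (sol c - 1) = Enc X 1"
  proof -
    have k: "sol c - 1 < p" using scR by auto
    have "row1 ! \<sigma>1 (j (sol c - 1)) = row1 ! i" using jk2[OF k] row1i scR by simp
    then have "\<sigma>1 (j (sol c - 1)) = i" using rb jk2[OF k] ip lrow nth_eq_iff_index_eq by metis
    then show ?thesis using Tn k r3i by simp
  qed
  have To: "\<exists>k'\<ge>2. T ! k = Enc X k'" if "k < p" "k \<noteq> sol c - 1" for k
  proof -
    have "\<sigma>1 (j k) \<noteq> i" using jk2[OF that(1)] row1i that scR by auto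
    then have "T ! k \<in> set S" using Tn that r3o jk2 by simp
    then show ?thesis using sS by auto
  qed
  have le: "length e = m" using eT lr lS pm p_def scR by auto
  have "sol c - 1 < p" using scR by auto
  then have "e ! (sol c - 1) = Enc X 1" using eT Tc lr by (simp add: nth_append)
  moreover have "\<exists>k\<ge>2. e ! q = Enc X k" if "q < m" "q \<noteq> sol c - 1" for q
  proof (cases "q < p")
    case True then show ?thesis using eT To that lr by (simp add: nth_append)
  next
    case False
    then have "e ! q = drop (p-1) S ! (q - p + 1 - 1)" using eT lr scR
      by (simp add: nth_append)
    moreover have "q - p + 1 - 1 < length (drop (p-1) S)" using False that lS scR by auto
    ultimately have "e ! q \<in> set S" by (metis nth_mem in_set_dropD)
    then show ?thesis using sS by auto
  qed
  ultimately show ?thesis using \<open>L' = L0\<close> le by blast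
qed

lemma sol_range: "R \<in> rooms \<Longrightarrow> c \<in> R \<Longrightarrow> 1 \<le> sol c \<and> sol c \<le> card R"
  using roomc by fastforce

lemma neighbor_ok:
  assumes R1: "R1 \<in> rooms" "c1 \<in> R1" and R2: "R2 \<in> rooms" "c2 \<in> R2" and ne: "sol c1 \<noteq> sol c2"
  shows "neighbor_check rooms ord (c1, c2) L0 \<subseteq> {Some L0}"
proof
  fix x assume x: "x \<in> neighbor_check rooms ord (c1, c2) L0"
  define m where "m = max (card R1) (card R2)"
  have x0: "x \<in> (\<Union>(e1, L1) \<in> convert ord R1 c1 m LA L0. \<Union>(e2, L2) \<in> convert ord R2 c2 m LB L1.
      \<Union>\<tau> \<in> perms m. (if permute_list \<tau> e2 ! idx (permute_list \<tau> e1) (Enc LA 1) = Enc LB 1 then {None} else {Some L2}))"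
    using x unfolding neighbor_check_def Let_def room_of_eq[OF R1] room_of_eq[OF R2] m_def[symmetric] fst_conv snd_conv .
  then obtain e1 L1 where 1: "(e1,L1) \<in> convert ord R1 c1 m LA L0" and
    "x \<in> (\<Union>(e2, L2) \<in> convert ord R2 c2 m LB L1.
      \<Union>\<tau> \<in> perms m. (if permute_list \<tau> e2 ! idx (permute_list \<tau> e1) (Enc LA 1) = Enc LB 1 then {None} else {Some L2}))"
    by (rule UN_pair_E)
  from this(2) obtain e2 L2 where 2: "(e2,L2) \<in> convert ord R2 c2 m LB L1" and
    "x \<in> (\<Union>\<tau> \<in> perms m. (if permute_list \<tau> e2 ! idx (permute_list \<tau> e1) (Enc LA 1) = Enc LB 1 then {None} else {Some L2}))"
    by (rule UN_pair_E)
  from this(2) obtain \<tau> where tau: "\<tau> \<in> perms m"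
    and x': "x \<in> (if permute_list \<tau> e2 ! idx (permute_list \<tau> e1) (Enc LA 1) = Enc LB 1 then {None} else {Some L2})"
    by (rule UN_E)
  have m1: "card R1 \<le> m" "card R2 \<le> m" by (auto simp: m_def)
  note c1 = convert_ok[OF R1 m1(1) 1]
  then have "L1 = L0" by simp
  note c2 = convert_ok[OF R2 m1(2) 2[unfolded this]]
  have s1: "1 \<le> sol c1" "sol c1 \<le> m" using sol_range[OF R1] m1 by auto
  have s2: "1 \<le> sol c2" "sol c2 \<le> m" using sol_range[OF R2] m1 by auto
  have pt: "\<tau> permutes {..<length e1}" "\<tau> permutes {..<length e2}" using tau c1 c2 by (auto simp: perms_def)
  define i where "i = idx (permute_list \<tau> e1) (Enc LA 1)"
  have "sol c1 - 1 < length e1" using c1 s1 by auto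
  then have "Enc LA 1 \<in> set e1" using c1 by (metis nth_mem)
  then have "Enc LA 1 \<in> set (permute_list \<tau> e1)" using pt by simp
  from idx_in[OF this] have i: "i < m" "e1 ! \<tau> i = Enc LA 1" using c1 by (auto simp: i_def pl_nth)
  have ti: "\<tau> i < m" using perm_lt[OF tau i(1)] .
  have "\<tau> i = sol c1 - 1"
  proof (rule ccontr)
    assume "\<tau> i \<noteq> sol c1 - 1"
    then obtain k where "k \<ge> 2" "e1 ! \<tau> i = Enc LA k" using c1 ti by blast
    then show False using i by simp
  qed
  have "permute_list \<tau> e2 ! i \<noteq> Enc LB 1"
  proof
    assume a: "permute_list \<tau> e2 ! i = Enc LB 1"
    then have a2: "e2 ! (sol c1 - 1) = Enc LB 1" using i c2 \<open>\<tau> i = sol c1 - 1\<close> by (simp add: pl_nth)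
    have "sol c1 - 1 < m" using s1 by auto
    then have "sol c1 - 1 = sol c2 - 1" using c2 a2 by force
    then show False using s1 s2 ne by simp
  qed
  then show "x \<in> {Some L0}" using x' c2 i_def by simp
qed

lemma convert_list_ok:
  "(\<forall>(c,X)\<in>set cs. \<exists>R\<in>rooms. c \<in> R \<and> card R \<le> n) \<Longrightarrow> (es, L') \<in> convert_list rooms ord n cs L0 \<Longrightarrow>
   L' = L0 \<and> (\<forall>e\<in>set es. \<exists>(c,X)\<in>set cs. length e = n \<and> (\<forall>q<n. q \<noteq> sol c - 1 \<longrightarrow> (\<exists>k\<ge>2. e ! q = Enc X k)))"
proof (induction cs arbitrary: es L')
  case Nil then show ?case by simp
next
  case (Cons a cs)
  obtain c X where a: "a = (c, X)" by (cases a)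
  from Cons.prems(1) a obtain R where R: "R \<in> rooms" "c \<in> R" "card R \<le> n" by auto
  from Cons.prems(2) obtain e L1 es' where 1: "(e, L1) \<in> convert ord R c n X L0"
    and 2: "(es', L') \<in> convert_list rooms ord n cs L1" and es: "es = e # es'"
    using room_of_eq[OF R(1,2)] unfolding a by auto
  note ce = convert_ok[OF R 1]
  then have "L1 = L0" by simp
  with 2 Cons.IH[of es' L'] Cons.prems(1) have ih: "L' = L0 \<and> (\<forall>e\<in>set es'. \<exists>(c,X)\<in>set cs. length e = n \<and> (\<forall>q<n. q \<noteq> sol c - 1 \<longrightarrow> (\<exists>k\<ge>2. e ! q = Enc X k)))"
    by auto
  show ?case using ih ce es a by auto
qed

lemma arrow_ok:
  assumes t: "arrow b \<in> \<Union>rooms" and os: "\<forall>c\<in>set (oth b). c \<in> \<Union>rooms \<and> sol c < sol (arrow b)"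
  shows "arrow_check rooms ord arrow oth b L0 \<subseteq> {Some L0}"
proof
  fix x assume x: "x \<in> arrow_check rooms ord arrow oth b L0"
  define t where "t = arrow b"
  define os where "os = oth b"
  define m where "m = Max ((\<lambda>c. card (room_of rooms c)) ` set (t # os))"
  define n where "n = 2 * m - 1"
  define F where "F e1 es L2 r = (if (\<exists>f\<in>set (map (rotate r) es). \<exists>j<m. f ! ((idx (rotate r e1) (Enc LA 1) + j) mod n) \<in> {Enc LB 1, Enc LC 1, Enc LD 1}) then {None} else {Some L2})" for e1 es and L2 :: layout and r
  have x0: "x \<in> (\<Union>(e1, L1) \<in> convert ord (room_of rooms t) t n LA L0.
     \<Union>(es, L2) \<in> convert_list rooms ord n (zip os [LB,LC,LD]) L1. \<Union>r \<in> {..<n}. F e1 es L2 r)"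
    using x unfolding arrow_check_def Let_def t_def[symmetric] os_def[symmetric] m_def[symmetric] n_def[symmetric] F_def .
  then obtain e1 L1 where 1: "(e1,L1) \<in> convert ord (room_of rooms t) t n LA L0" and
    "x \<in> (\<Union>(es, L2) \<in> convert_list rooms ord n (zip os [LB,LC,LD]) L1. \<Union>r \<in> {..<n}. F e1 es L2 r)"
    by (rule UN_pair_E)
  from this(2) obtain es L2 where 2: "(es,L2) \<in> convert_list rooms ord n (zip os [LB,LC,LD]) L1" and
    "x \<in> (\<Union>r \<in> {..<n}. F e1 es L2 r)"
    by (rule UN_pair_E)
  from this(2) obtain r where r: "r < n" and x': "x \<in> F e1 es L2 r" by blast
  have mge: "card (room_of rooms c) \<le> m" if "c \<in> set (t # os)" for c
    unfolding m_def using that by (intro Max_ge) auto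
  from t obtain Rt where Rt: "Rt \<in> rooms" "t \<in> Rt" unfolding t_def by auto
  have st: "1 \<le> sol t" "sol t \<le> card Rt" using sol_range[OF Rt] by auto
  have cRt: "card Rt \<le> m" using mge[of t] room_of_eq[OF Rt] by simp
  have nm: "m \<le> n" "card Rt \<le> n" "n = 2 * m - 1" using st cRt n_def by auto
  note c1 = convert_ok[OF Rt nm(2) 1[unfolded room_of_eq[OF Rt]]]
  then have "L1 = L0" by simp
  have hyp: "\<forall>(c,X)\<in>set (zip os [LB,LC,LD]). \<exists>R\<in>rooms. c \<in> R \<and> card R \<le> n"
  proof (intro ballI, clarify)
    fix c X assume "(c, X) \<in> set (zip os [LB,LC,LD])"
    then have co: "c \<in> set os" by (rule set_zip_leftD)
    then obtain R where R: "R \<in> rooms" "c \<in> R" using os os_def by auto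
    then show "\<exists>R\<in>rooms. c \<in> R \<and> card R \<le> n" using mge[of c] co room_of_eq[OF R] nm by force
  qed
  note c2 = convert_list_ok[OF hyp 2[unfolded \<open>L1 = L0\<close>]]
  define i where "i = idx (rotate r e1) (Enc LA 1)"
  have stn: "sol t - 1 < n" using st nm by auto
  have "Enc LA 1 \<in> set e1" using c1 stn by (metis nth_mem)
  then have "Enc LA 1 \<in> set (rotate r e1)" by simp
  from idx_in[OF this] have i: "i < n" "e1 ! ((r + i) mod n) = Enc LA 1" using c1 by (auto simp: i_def nth_rotate)
  have n0: "n > 0" using stn by simp
  have ri: "(r + i) mod n = sol t - 1"
  proof (rule ccontr)
    assume "(r + i) mod n \<noteq> sol t - 1"
    moreover have "(r + i) mod n < n" using n0 by simp
    ultimately obtain k where "k \<ge> 2" "e1 ! ((r + i) mod n) = Enc LA k" using c1 by blast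
    then show False using i by simp
  qed
  have "\<not> (\<exists>f\<in>set (map (rotate r) es). \<exists>j<m. f ! ((i + j) mod n) \<in> {Enc LB 1, Enc LC 1, Enc LD 1})"
  proof
    assume "\<exists>f\<in>set (map (rotate r) es). \<exists>j<m. f ! ((i + j) mod n) \<in> {Enc LB 1, Enc LC 1, Enc LD 1}"
    then obtain e j where e: "e \<in> set es" and j: "j < m" and bad: "rotate r e ! ((i + j) mod n) \<in> {Enc LB 1, Enc LC 1, Enc LD 1}"
      by auto
    from c2 e obtain c X where cX: "(c, X) \<in> set (zip os [LB,LC,LD])" and le: "length e = n"
      and pr: "\<forall>q<n. q \<noteq> sol c - 1 \<longrightarrow> (\<exists>k\<ge>2. e ! q = Enc X k)" by blast
    have co: "c \<in> set os" using cX by (rule set_zip_leftD)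
    then have sc: "sol c < sol t" using os os_def t_def by auto
    have sc1: "1 \<le> sol c" using co os os_def sol_range by blast
    have "(r + (i + j) mod n) mod n = ((r + i) mod n + j) mod n" by (simp add: mod_add_right_eq mod_add_left_eq add.assoc)
    also have "\<dots> = sol t - 1 + j" using ri st cRt j n_def by simp
    finally have eq: "rotate r e ! ((i + j) mod n) = e ! (sol t - 1 + j)" using le n0 by (simp add: nth_rotate)
    have lt: "sol t - 1 + j < n" using st cRt j n_def by simp
    have "sol t - 1 + j \<noteq> sol c - 1" using sc st sc1 by auto
    then obtain k where "k \<ge> 2" "e ! (sol t - 1 + j) = Enc X k" using pr lt by blast
    then show False using bad eq by auto
  qed
  from x' if_not_P[OF this[unfolded i_def], of "{None}" "{Some L2}"] have "x = Some L2" unfolding F_def by (metis singletonD)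
  then show "x \<in> {Some L0}" using c2 by simp
qed

end

theorem lemma1:
  fixes nr nc :: nat and W Bk :: "pos set" and rooms :: "pos set set"
    and given :: "pos \<Rightarrow> nat option" and arrow :: "pos \<Rightarrow> pos" and sol :: "pos \<Rightarrow> nat"
    and ord :: "pos set \<Rightarrow> pos list" and oth :: "pos \<Rightarrow> pos list"
    and rl :: "pos set list" and np :: "(pos \<times> pos) list" and bl :: "pos list"
  assumes puzzle: "makaro_puzzle nr nc W Bk rooms given arrow"
    and solution: "makaro_solution W Bk rooms given arrow sol"
    and ord_ok: "\<forall>R\<in>rooms. distinct (ord R) \<and> set (ord R) = R"
    and oth_ok: "\<forall>b\<in>Bk. distinct (oth b) \<and> set (oth b) = {c \<in> W. adj b c \<and> c \<noteq> arrow b}"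
    and rl_ok: "distinct rl \<and> set rl = rooms"
    and bl_ok: "distinct bl \<and> set bl = Bk"
    and np_ok: "distinct np \<and>
      (\<forall>(c1, c2) \<in> set np. c1 \<in> W \<and> c2 \<in> W \<and> adj c1 c2 \<and> \<not> same_room rooms c1 c2) \<and>
      (\<forall>c1\<in>W. \<forall>c2\<in>W. adj c1 c2 \<and> \<not> same_room rooms c1 c2 \<longrightarrow>
         ((c1, c2) \<in> set np \<longleftrightarrow> (c2, c1) \<notin> set np))"
  shows "None \<notin> protocol rooms arrow ord oth rl np bl (setup_layout rooms sol)"
proof -
  have P: "W \<inter> Bk = {}" "\<Union> rooms = W" "\<forall>R\<in>rooms. \<forall>R'\<in>rooms. R \<noteq> R' \<longrightarrow> R \<inter> R' = {}"
      "\<forall>b\<in>Bk. arrow b \<in> W \<and> adj b (arrow b)"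
    using puzzle unfolding makaro_puzzle_def by auto
  have Sl: "\<forall>R\<in>rooms. sol ` R = {1..card R}"
      "\<forall>c\<in>W. \<forall>c'\<in>W. adj c c' \<and> \<not> same_room rooms c c' \<longrightarrow> sol c \<noteq> sol c'"
      "\<forall>b\<in>Bk. \<forall>c\<in>W. adj b c \<and> c \<noteq> arrow b \<longrightarrow> sol c < sol (arrow b)"
    using solution unfolding makaro_solution_def by auto
  interpret mk rooms ord sol
    using P(3) ord_ok Sl(1) by unfold_locales auto
  have rc: "run_seq (room_check ord) rl L0 \<subseteq> {Some L0}"
    by (rule run_seq_ok) (use rl_ok room_check_ok in blast)
  have nc: "run_seq (neighbor_check rooms ord) np L0 \<subseteq> {Some L0}"
  proof (rule run_seq_ok, intro ballI)
    fix cc assume cc: "cc \<in> set np"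
    obtain c1 c2 where ce: "cc = (c1, c2)" by (cases cc)
    have h: "c1 \<in> W" "c2 \<in> W" "adj c1 c2" "\<not> same_room rooms c1 c2" using np_ok cc ce by auto
    then have ne: "sol c1 \<noteq> sol c2" using Sl(2) by blast
    from h P(2) obtain R1 R2 where "R1 \<in> rooms" "c1 \<in> R1" "R2 \<in> rooms" "c2 \<in> R2" by blast
    from neighbor_ok[OF this ne] show "neighbor_check rooms ord cc L0 \<subseteq> {Some L0}" using ce by simp
  qed
  have ac: "run_seq (arrow_check rooms ord arrow oth) bl L0 \<subseteq> {Some L0}"
  proof (rule run_seq_ok, intro ballI)
    fix b assume "b \<in> set bl"
    then have b: "b \<in> Bk" using bl_ok by simp
    have t: "arrow b \<in> \<Union>rooms" using P(2,4) b by auto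
    have "\<forall>c\<in>set (oth b). c \<in> \<Union>rooms \<and> sol c < sol (arrow b)"
      using oth_ok b Sl(3) P(2) by auto
    from arrow_ok[of arrow b oth, OF t this] show "arrow_check rooms ord arrow oth b L0 \<subseteq> {Some L0}" .
  qed
  have "protocol rooms arrow ord oth rl np bl L0 \<subseteq> {Some L0}"
  proof
    fix x assume "x \<in> protocol rooms arrow ord oth rl np bl L0"
    then obtain o1 where o1: "o1 \<in> run_seq (room_check ord) rl L0" and
      x1: "x \<in> (case o1 of None \<Rightarrow> {None} | Some L1 \<Rightarrow>
      (\<Union>o2 \<in> run_seq (neighbor_check rooms ord) np L1.
        case o2 of None \<Rightarrow> {None} | Some L2 \<Rightarrow>
        run_seq (arrow_check rooms ord arrow oth) bl L2))" unfolding protocol_def by blast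
    have "o1 = Some L0" using o1 rc by blast
    with x1 obtain o2 where o2: "o2 \<in> run_seq (neighbor_check rooms ord) np L0" and
      x2: "x \<in> (case o2 of None \<Rightarrow> {None} | Some L2 \<Rightarrow> run_seq (arrow_check rooms ord arrow oth) bl L2)" by auto
    have "o2 = Some L0" using o2 nc by blast
    with x2 ac show "x \<in> {Some L0}" by auto
  qed
  then show ?thesis by blast
qed

end
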